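(* Let $X_0\in\mathcal{D}^0$. Then system (S) has a unique solution $X(t)=(B(t),I(t),M(t),N(t))$ defined on $[0,+\infty)$ with $X(0)=X_0$. Moreover $X(t)\in\mathcal{D}^0$ for every $t>0$, $$\frac{b}{m+\mu}\le \liminf_{t\to+\infty}\big(B(t)+I(t)\big)\le \limsup_{t\to+\infty}\big(B(t)+I(t)\big)\le \frac{b}{m},$$ and there is a constant $L>0$ (which may depend on $X_0$) such that $M(t)+N(t)\le L$ for all $t\ge 0$.
   Context: All parameters $b,\lambda,\gamma,m,\mu,r,n,p,h,\beta,\delta,e$ are positive constants. Here $B,I$ denote healthy and infected bees and $M,N$ healthy and infected mites. The model (S) is $$B'=\frac{bB}{B+I}-\lambda BN-\gamma BI-mB,\qquad I'=\frac{bI}{B+I}+\lambda BN+\gamma BI-(m+\mu)I,$$ $$M'=r(M+N)-nM-\frac{p}{h(B+I)}M(M+N)-M(\beta I+\delta N+eB),$$ $$N'=-nN-\frac{p}{h(B+I)}N(M+N)+\beta MI+\delta MN-eNB,$$ considered on the domain $\mathcal{D}^0=\{(B,I,M,N)\in\mathbb{R}^4_+ : B+I\neq 0\}$, where $\mathbb{R}_+=[0,\infty)$. *)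

theory Defs
  imports "HOL-Analysis.Analysis" "HOL-Library.Extended_Real" "HOL-Library.Liminf_Limsup"
begin

definition D0 :: "(real \<times> real \<times> real \<times> real) set" where
  "D0 = {(B, I, M, N). B \<ge> 0 \<and> I \<ge> 0 \<and> M \<ge> 0 \<and> N \<ge> 0 \<and> B + I \<noteq> 0}"

definition bee_solution ::
  "real \<Rightarrow> real \<Rightarrow> real \<Rightarrow> real \<Rightarrow> real \<Rightarrow> real \<Rightarrow> real \<Rightarrow> real \<Rightarrow> real \<Rightarrow> real \<Rightarrow> real \<Rightarrow> real \<Rightarrow>
   (real \<Rightarrow> real) \<Rightarrow> (real \<Rightarrow> real) \<Rightarrow> (real \<Rightarrow> real) \<Rightarrow> (real \<Rightarrow> real) \<Rightarrow> bool" where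
  "bee_solution b lam gam m mu r n p h beta delta e B I M N \<longleftrightarrow>
    (\<forall>t\<ge>0. B t + I t \<noteq> 0 \<and>
      (B has_real_derivative
         (b * B t / (B t + I t) - lam * B t * N t - gam * B t * I t - m * B t)) (at t within {0..}) \<and>
      (I has_real_derivative
         (b * I t / (B t + I t) + lam * B t * N t + gam * B t * I t - (m + mu) * I t)) (at t within {0..}) \<and>
      (M has_real_derivative
         (r * (M t + N t) - n * M t - p / (h * (B t + I t)) * M t * (M t + N t)
          - M t * (beta * I t + delta * N t + e * B t))) (at t within {0..}) \<and>
      (N has_real_derivative
         (- n * N t - p / (h * (B t + I t)) * N t * (M t + N t) + beta * M t * I t
          + delta * M t * N t - e * N t * B t)) (at t within {0..}))"

end

theory Submission
  imports Defs
begin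


lemma deriv_mono_interval:
  fixes g :: "real \<Rightarrow> real"
  assumes "a \<le> b" "continuous_on {a..b} g"
    "\<And>t. a < t \<Longrightarrow> t < b \<Longrightarrow> (g has_real_derivative g' t) (at t)"
    "\<And>t. a < t \<Longrightarrow> t < b \<Longrightarrow> g' t \<ge> 0"
  shows "g a \<le> g b"
proof (cases "a = b")
  case True then show ?thesis by simp
next
  case False
  then have ab: "a < b" using assms(1) by simp
  obtain l z where z: "a < z" "z < b" "DERIV g z :> l" "g b - g a = (b - a) * l"
    using MVT[OF ab assms(2)] assms(3) real_differentiable_def by metis
  have "l = g' z" using DERIV_unique[OF z(3) assms(3)[OF z(1,2)]] .
  then have "l \<ge> 0" using assms(4)[OF z(1,2)] by simp
  then show ?thesis using z(4) ab by (smt (verit) mult_nonneg_nonneg)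
qed

lemma within_to_at:
  assumes "(f has_real_derivative D) (at t within {0..})" "0 < t"
  shows "(f has_real_derivative D) (at t)"
proof -
  have "t \<in> interior {0::real..}" using assms(2) by simp
  then have "at t within {0..} = at t" by (rule at_within_interior)
  then show ?thesis using assms(1) by simp
qed

lemma deriv_cont_on:
  fixes f :: "real \<Rightarrow> real"
  assumes "\<And>t. t \<in> S \<Longrightarrow> (f has_real_derivative f' t) (at t within {0..})" "S \<subseteq> {0..}"
  shows "continuous_on S f"
proof -
  have "continuous (at t within S) f" if "t \<in> S" for t
  proof -
    have "continuous (at t within {0..}) f" using DERIV_continuous[OF assms(1)[OF that]] .
    then show ?thesis using continuous_within_subset assms(2) by blast
  qed
  then show ?thesis using continuous_on_eq_continuous_within by blast
qed

lemma deriv_mono0: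
  fixes g :: "real \<Rightarrow> real"
  assumes "\<And>t. 0 \<le> t \<Longrightarrow> (g has_real_derivative g' t) (at t within {0..})"
    "\<And>t. a < t \<Longrightarrow> t < b \<Longrightarrow> g' t \<ge> 0" "0 \<le> a" "a \<le> b"
  shows "g a \<le> g b"
proof (rule deriv_mono_interval[OF assms(4) _ _ assms(2)])
  show "continuous_on {a..b} g" using assms(1,3) by (intro deriv_cont_on[of _ _ g']) auto
  show "(g has_real_derivative g' t) (at t)" if "a < t" "t < b" for t
    using within_to_at[OF assms(1)] that assms(3) by auto
qed auto

lemma barrier:
  fixes f :: "real \<Rightarrow> real"
  assumes d: "\<And>t. 0 \<le> t \<Longrightarrow> (f has_real_derivative f' t) (at t within {0..})"
    and f0: "f 0 \<ge> a" and pos: "\<And>t. 0 \<le> t \<Longrightarrow> f t < a \<Longrightarrow> f' t \<ge> 0" and t1: "0 \<le> t1"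
  shows "f t1 \<ge> a"
proof (rule ccontr)
  assume neg: "\<not> f t1 \<ge> a"
  define S where "S = {0..t1} \<inter> f -` {a..}"
  have cont: "continuous_on {0..t1} f" using d by (intro deriv_cont_on[of _ _ f']) auto
  have "closed S" unfolding S_def by (rule continuous_closed_preimage[OF cont]) auto
  moreover have "0 \<in> S" using f0 t1 by (simp add: S_def)
  moreover have "bdd_above S" unfolding S_def by (auto intro: bdd_aboveI[of _ t1])
  ultimately have inS: "Sup S \<in> S" using closed_contains_Sup by blast
  define t0 where "t0 = Sup S"
  have t0: "0 \<le> t0" "t0 \<le> t1" "f t0 \<ge> a" using inS by (auto simp: S_def t0_def)
  have below: "f s < a" if "t0 < s" "s \<le> t1" for s
  proof (rule ccontr)
    assume "\<not> f s < a"
    then have "s \<in> S" using that t0 by (auto simp: S_def)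
    then have "s \<le> t0" unfolding t0_def using \<open>bdd_above S\<close> by (simp add: cSup_upper)
    then show False using that by simp
  qed
  have "f t0 \<le> f t1"
  proof (rule deriv_mono0[OF d _ t0(1,2)])
    fix s assume s: "t0 < s" "s < t1"
    show "f' s \<ge> 0" by (rule pos) (use below s t0 in auto)
  qed
  then show False using neg t0 by simp
qed

lemma exp_lower:
  fixes f :: "real \<Rightarrow> real"
  assumes d: "\<And>t. 0 \<le> t \<Longrightarrow> (f has_real_derivative f' t) (at t within {0..})"
    and ineq: "\<And>t. 0 \<le> t \<Longrightarrow> f' t \<ge> b - c * f t" and c: "c > 0" and t: "0 \<le> t"
  shows "f t \<ge> b / c + (f 0 - b / c) * exp (- c * t)"
proof -
  define g where "g s = (f s - b / c) * exp (c * s)" for s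
  have dg: "(g has_real_derivative (f' s * exp (c * s) + (f s - b/c) * (exp (c * s) * c))) (at s within {0..})"
    if "0 \<le> s" for s :: real
    unfolding g_def by (auto intro!: derivative_eq_intros d that)
  have "g 0 \<le> g t"
  proof (rule deriv_mono0[OF dg _ order_refl t])
    fix s :: real assume "0 < s"
    have e: "(f s - b/c) * c = c * f s - b" using c by (simp add: field_simps)
    have "f' s + (f s - b/c) * c \<ge> 0" unfolding e using ineq[of s] \<open>0 < s\<close> by linarith
    then have "(f' s + (f s - b/c) * c) * exp (c * s) \<ge> 0" by simp
    moreover have "f' s * exp (c * s) + (f s - b/c) * (exp (c * s) * c) = (f' s + (f s - b/c) * c) * exp (c * s)"
      by (simp add: algebra_simps)
    ultimately show "f' s * exp (c * s) + (f s - b/c) * (exp (c * s) * c) \<ge> 0" by simp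
  qed
  then have "f 0 - b/c \<le> (f t - b / c) * exp (c * t)" by (simp add: g_def)
  then have "(f 0 - b/c) * exp (- c * t) \<le> (f t - b / c) * exp (c * t) * exp (- c * t)"
    by (simp add: mult_right_mono)
  also have "\<dots> = f t - b/c" by (simp add: mult.assoc flip: exp_add)
  finally show ?thesis by simp
qed




lemma inner_vec_deriv:
  fixes d :: "real \<Rightarrow> 'a::real_inner"
  assumes "(d has_vector_derivative v) (at s within S)"
  shows "((\<lambda>s. inner (d s) (d s)) has_real_derivative (2 * inner (d s) v)) (at s within S)"
proof -
  have D: "((\<lambda>s. inner (d s) (d s)) has_derivative (\<lambda>h. inner (d s) (h *\<^sub>R v) + inner (h *\<^sub>R v) (d s))) (at s within S)"
    using assms unfolding has_vector_derivative_def by (intro derivative_eq_intros) auto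
  have E: "(\<lambda>h. inner (d s) (h *\<^sub>R v) + inner (h *\<^sub>R v) (d s)) = (*) (2 * inner (d s) v)"
    by (auto simp: inner_commute algebra_simps)
  show ?thesis unfolding has_field_derivative_def using D unfolding E .
qed

lemma ode_unique:
  fixes x y :: "real \<Rightarrow> 'a::real_inner"
  assumes dx: "\<And>s. 0 \<le> s \<Longrightarrow> s \<le> T \<Longrightarrow> (x has_vector_derivative F (x s)) (at s within {0..})"
    and dy: "\<And>s. 0 \<le> s \<Longrightarrow> s \<le> T \<Longrightarrow> (y has_vector_derivative F (y s)) (at s within {0..})"
    and xU: "\<And>s. 0 \<le> s \<Longrightarrow> s \<le> T \<Longrightarrow> x s \<in> U"
    and yU: "\<And>s. 0 \<le> s \<Longrightarrow> s \<le> T \<Longrightarrow> y s \<in> U"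
    and lip: "L-lipschitz_on U F" and init: "x 0 = y 0" and t: "0 \<le> t" "t \<le> T"
  shows "x t = y t"
proof -
  define u where "u s = inner (x s - y s) (x s - y s)" for s
  define u' where "u' s = 2 * inner (x s - y s) (F (x s) - F (y s))" for s
  define w where "w s = - (u s * exp (- (2 * L) * s))" for s
  define w' where "w' s = - (u' s * exp (- (2 * L) * s) + u s * (exp (- (2 * L) * s) * (- (2 * L))))" for s
  have L0: "L \<ge> 0" using lipschitz_on_nonneg[OF lip] .
  have du: "(u has_real_derivative u' s) (at s within {0..})" if "0 \<le> s" "s \<le> T" for s
    unfolding u_def u'_def
    by (rule inner_vec_deriv, rule has_vector_derivative_diff) (use dx dy that in auto)
  have dw: "(w has_real_derivative w' s) (at s within {0..})" if "0 \<le> s" "s \<le> T" for s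
    unfolding w_def w'_def by (auto intro!: derivative_eq_intros du that)
  have bound: "u' s \<le> 2 * L * u s" if "0 \<le> s" "s \<le> T" for s
  proof -
    have "inner (x s - y s) (F (x s) - F (y s)) \<le> norm (x s - y s) * norm (F (x s) - F (y s))"
      by (rule norm_cauchy_schwarz)
    also have "norm (F (x s) - F (y s)) \<le> L * norm (x s - y s)"
      using lipschitz_onD[OF lip xU[OF that] yU[OF that]] by (simp add: dist_norm)
    then have "norm (x s - y s) * norm (F (x s) - F (y s)) \<le> norm (x s - y s) * (L * norm (x s - y s))"
      by (simp add: mult_left_mono)
    also have "\<dots> = L * u s" by (simp add: u_def power2_norm_eq_inner[symmetric] power2_eq_square)
    finally show ?thesis by (simp add: u'_def)
  qed
  have "w 0 \<le> w t"
  proof (rule deriv_mono_interval[OF t(1), of w w'])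
    show "continuous_on {0..t} w" using dw t by (intro deriv_cont_on[of _ _ w']) auto
    show "(w has_real_derivative w' s) (at s)" if "0 < s" "s < t" for s
      using within_to_at[OF dw] that t by auto
    show "w' s \<ge> 0" if "0 < s" "s < t" for s
    proof -
      have "w' s = (2 * L * u s - u' s) * exp (- (2 * L) * s)" by (simp add: w'_def algebra_simps)
      moreover have "2 * L * u s - u' s \<ge> 0" using bound[of s] that t by auto
      ultimately show ?thesis by simp
    qed
  qed
  moreover have "w 0 = 0" using init by (simp add: w_def u_def)
  moreover have "u t \<ge> 0" by (simp add: u_def)
  ultimately have "u t * exp (- (2 * L) * t) \<le> 0" by (simp add: w_def)
  then have "u t \<le> 0" by (simp add: mult_le_0_iff)
  then have "u t = 0" using \<open>u t \<ge> 0\<close> by simp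
  then show ?thesis by (simp add: u_def)
qed




lemma poly_integral:
  fixes c :: real
  assumes "0 \<le> t"
  shows "integral {0..t} (\<lambda>s. c * s ^ k) = c * t ^ Suc k / Suc k"
proof -
  have "((\<lambda>s. c * s ^ k) has_integral ((\<lambda>s. c / Suc k * s ^ Suc k) t - (\<lambda>s. c / Suc k * s ^ Suc k) 0)) {0..t}"
  proof (rule fundamental_theorem_of_calculus[OF assms])
    fix s :: real assume "s \<in> {0..t}"
    have D1: "((\<lambda>s. s ^ Suc k) has_real_derivative real (Suc k) * s ^ k) (at s)"
      using DERIV_pow[of "Suc k" s] by simp
    have "((\<lambda>s. c / Suc k * s ^ Suc k) has_real_derivative (c / Suc k * (real (Suc k) * s ^ k))) (at s)"
      by (rule DERIV_cmult[OF D1])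
    moreover have "c / Suc k * (real (Suc k) * s ^ k) = c * s ^ k" by (simp del: of_nat_Suc)
    ultimately have "((\<lambda>s. c / Suc k * s ^ Suc k) has_real_derivative c * s ^ k) (at s within {0..t})"
      using has_field_derivative_at_within by metis
    then show "((\<lambda>s. c / Suc k * s ^ Suc k) has_vector_derivative c * s ^ k) (at s within {0..t})"
      using has_real_derivative_iff_has_vector_derivative by metis
  qed
  then show ?thesis by (auto dest: integral_unique)
qed

locale picard =
  fixes F :: "'a::banach \<Rightarrow> 'a" and L :: real and x0 :: 'a
  assumes lip: "L-lipschitz_on UNIV F" and Lpos: "L > 0"
begin

primrec P :: "nat \<Rightarrow> real \<Rightarrow> 'a" where
  "P 0 = (\<lambda>t. x0)"
| "P (Suc k) = (\<lambda>t. x0 + integral {0..t} (\<lambda>s. F (P k s)))"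

lemma P_Suc: "P (Suc k) t = x0 + integral {0..t} (\<lambda>s. F (P k s))"
  by simp

declare P.simps(2)[simp del]

lemma P_at0: "P k 0 = x0"
  by (cases k) (simp_all add: P_Suc)

lemma Fcont: "continuous_on S F"
  using lipschitz_on_continuous_on[OF lip] continuous_on_subset by blast

lemma Fnorm: "norm (F u - F v) \<le> L * norm (u - v)"
  using lipschitz_onD[OF lip] by (simp add: dist_norm)

lemma P_cont: "continuous_on {0..T} (P k)"
proof (induction k arbitrary: T)
  case 0 then show ?case by simp
next
  case (Suc k)
  have "continuous_on {0..T} (\<lambda>s. F (P k s))"
    using continuous_on_compose[OF Suc.IH Fcont] by (simp add: o_def)
  then have "continuous_on {0..T} (\<lambda>t. integral {0..t} (\<lambda>s. F (P k s)))"
    by (intro indefinite_integral_continuous_1 integrable_continuous_interval)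
  then show ?case unfolding P.simps(2) by (intro continuous_on_add continuous_on_const)
qed

lemma FP_cont: "continuous_on {0..T} (\<lambda>s. F (P k s))"
  using continuous_on_compose[OF P_cont Fcont] by (simp add: o_def)

lemma FP_int: "(\<lambda>s. F (P k s)) integrable_on {0..T}"
  by (rule integrable_continuous_interval[OF FP_cont])

definition A where "A = norm (F x0)"

lemma P_bound:
  assumes "0 \<le> t"
  shows "norm (P (Suc k) t - P k t) \<le> A * L ^ k * t ^ Suc k / fact (Suc k)"
  using assms
proof (induction k arbitrary: t)
  case 0
  then show ?case by (simp add: A_def P_Suc)
next
  case (Suc k)
  define c where "c = A * L ^ Suc k / fact (Suc k)"
  have "P (Suc (Suc k)) t - P (Suc k) t = integral {0..t} (\<lambda>s. F (P (Suc k) s) - F (P k s))"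
    unfolding P_Suc[of "Suc k" t] P_Suc[of k t] by (simp add: integral_diff[OF FP_int FP_int])
  also have "norm \<dots> \<le> integral {0..t} (\<lambda>s. c * s ^ Suc k)"
  proof (rule integral_norm_bound_integral)
    show "(\<lambda>s. F (P (Suc k) s) - F (P k s)) integrable_on {0..t}"
      by (intro integrable_diff FP_int)
    show "(\<lambda>s. c * s ^ Suc k) integrable_on {0..t}"
      by (intro integrable_continuous_interval continuous_intros)
    fix s assume s: "s \<in> {0..t}"
    have "norm (F (P (Suc k) s) - F (P k s)) \<le> L * norm (P (Suc k) s - P k s)" by (rule Fnorm)
    also have "\<dots> \<le> L * (A * L ^ k * s ^ Suc k / fact (Suc k))"
      using Suc.IH[of s] s Lpos by (intro mult_left_mono) auto
    also have "\<dots> = c * s ^ Suc k" by (simp add: c_def)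
    finally show "norm (F (P (Suc k) s) - F (P k s)) \<le> c * s ^ Suc k" .
  qed
  also have "\<dots> = c * t ^ Suc (Suc k) / Suc (Suc k)" by (rule poly_integral[OF Suc.prems])
  also have "\<dots> = A * L ^ Suc k * t ^ Suc (Suc k) / fact (Suc (Suc k))"
    by (simp add: c_def del: of_nat_Suc fact_Suc) (simp add: fact_Suc field_simps del: of_nat_Suc)
  finally show ?case .
qed

definition xs where "xs t = x0 + suminf (\<lambda>i. P (Suc i) t - P i t)"

lemma P_telescope: "P n = (\<lambda>t. x0 + (\<Sum>i<n. P (Suc i) t - P i t))"
proof
  fix t
  show "P n t = x0 + (\<Sum>i<n. P (Suc i) t - P i t)"
    using sum_lessThan_telescope[of "\<lambda>i. P i t" n] by simp
qed

lemma P_unif: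
  assumes T: "0 \<le> T"
  shows "uniform_limit {0..T} P xs sequentially"
proof -
  define M where "M i = A * T * (inverse (fact i) * (L * T) ^ i)" for i
  have "uniform_limit {0..T} (\<lambda>n t. \<Sum>i<n. P (Suc i) t - P i t) (\<lambda>t. suminf (\<lambda>i. P (Suc i) t - P i t)) sequentially"
  proof (rule Weierstrass_m_test)
    show "summable M" unfolding M_def by (intro summable_mult summable_exp)
    fix i t assume t: "t \<in> {0..T}"
    have "norm (P (Suc i) t - P i t) \<le> A * L ^ i * t ^ Suc i / fact (Suc i)"
      using P_bound t by auto
    also have "\<dots> \<le> A * L ^ i * T ^ Suc i / fact i"
    proof -
      have A0: "A \<ge> 0" by (simp add: A_def)
      have "t ^ Suc i \<le> T ^ Suc i" using t by (intro power_mono) auto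
      then have "A * L ^ i * t ^ Suc i \<le> A * L ^ i * T ^ Suc i"
        using A0 Lpos by (intro mult_left_mono) auto
      moreover have "(fact i :: real) \<le> fact (Suc i)" by (rule fact_mono) auto
      moreover have "A * L ^ i * T ^ Suc i \<ge> 0" using A0 Lpos T by auto
      ultimately show ?thesis
        by (smt (verit) divide_left_mono divide_right_mono fact_gt_zero mult_pos_pos)
    qed
    also have "\<dots> = M i" by (simp add: M_def power_mult_distrib field_simps)
    finally show "norm (P (Suc i) t - P i t) \<le> M i" .
  qed
  then have "uniform_limit {0..T} (\<lambda>n t. x0 + (\<Sum>i<n. P (Suc i) t - P i t)) (\<lambda>t. x0 + suminf (\<lambda>i. P (Suc i) t - P i t)) sequentially"
    by (intro uniform_limit_intros)
  moreover have "(\<lambda>n t. x0 + (\<Sum>i<n. P (Suc i) t - P i t)) = P"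
    by (rule ext, rule P_telescope[symmetric])
  ultimately show ?thesis unfolding xs_def by simp
qed

lemma FP_unif:
  assumes T: "0 \<le> T"
  shows "uniform_limit {0..T} (\<lambda>n s. F (P n s)) (\<lambda>s. F (xs s)) sequentially"
proof (rule uniform_limitI)
  fix e :: real assume e: "e > 0"
  have "\<forall>\<^sub>F n in sequentially. \<forall>s\<in>{0..T}. dist (P n s) (xs s) < e / L"
    using uniform_limitD[OF P_unif[OF T]] e Lpos by simp
  then show "\<forall>\<^sub>F n in sequentially. \<forall>s\<in>{0..T}. dist (F (P n s)) (F (xs s)) < e"
  proof (rule eventually_mono)
    fix n assume H: "\<forall>s\<in>{0..T}. dist (P n s) (xs s) < e / L"
    show "\<forall>s\<in>{0..T}. dist (F (P n s)) (F (xs s)) < e"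
    proof
      fix s assume s: "s \<in> {0..T}"
      have "dist (F (P n s)) (F (xs s)) \<le> L * dist (P n s) (xs s)"
        using lipschitz_onD[OF lip] by simp
      also have "\<dots> < L * (e / L)" using H s Lpos by (intro mult_strict_left_mono) auto
      finally show "dist (F (P n s)) (F (xs s)) < e" using Lpos by simp
    qed
  qed
qed

lemma xs_cont:
  assumes "0 \<le> T"
  shows "continuous_on {0..T} xs"
  by (rule uniform_limit_theorem[OF _ P_unif[OF assms]]) (auto simp: P_cont)

lemma xs_integral:
  assumes T: "0 \<le> T"
  shows "xs T = x0 + integral {0..T} (\<lambda>s. F (xs s))"
proof -
  obtain I J where I: "\<And>n. ((\<lambda>s. F (P n s)) has_integral I n) {0..T}"
    and J: "((\<lambda>s. F (xs s)) has_integral J) {0..T}" and IJ: "I \<longlonglongrightarrow> J"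
    using uniform_limit_integral[OF FP_unif[OF T] FP_cont] by auto
  have "(\<lambda>n. P (Suc n) T) = (\<lambda>n. x0 + I n)"
  proof (rule ext)
    fix n show "P (Suc n) T = x0 + I n" using I[of n] by (simp add: P_Suc integral_unique)
  qed
  moreover have "(\<lambda>n. x0 + I n) \<longlonglongrightarrow> x0 + J" by (intro tendsto_intros IJ)
  ultimately have 1: "(\<lambda>n. P (Suc n) T) \<longlonglongrightarrow> x0 + J" by simp
  have "(\<lambda>n. P n T) \<longlonglongrightarrow> xs T"
    by (rule tendsto_uniform_limitI[OF P_unif[OF T]]) (use T in auto)
  then have "(\<lambda>n. P (Suc n) T) \<longlonglongrightarrow> xs T" by (rule LIMSEQ_Suc)
  with 1 have "xs T = x0 + J" using LIMSEQ_unique by blast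
  then show ?thesis using J by (simp add: integral_unique)
qed

lemma xs0: "xs 0 = x0"
  by (simp add: xs_def P_at0)

lemma xs_deriv:
  assumes t: "0 \<le> t"
  shows "(xs has_vector_derivative F (xs t)) (at t within {0..})"
proof -
  have c: "continuous_on {0..t+1} (\<lambda>s. F (xs s))"
    using continuous_on_compose[OF xs_cont Fcont, of "t+1"] t by (simp add: o_def)
  have "((\<lambda>u. integral {0..u} (\<lambda>s. F (xs s))) has_vector_derivative F (xs t)) (at t within {0..t+1})"
    by (rule integral_has_vector_derivative[OF c]) (use t in auto)
  then have "((\<lambda>u. x0 + integral {0..u} (\<lambda>s. F (xs s))) has_vector_derivative F (xs t)) (at t within {0..t+1})"
    by (auto intro!: derivative_eq_intros)
  then have "(xs has_vector_derivative F (xs t)) (at t within {0..t+1})"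
    by (rule has_vector_derivative_transform[rotated 2]) (use t xs_integral in auto)
  moreover have "at t within {0..t+1} = at t within {0..}"
    by (rule at_within_nhd[where S = "{..<t+1}"]) auto
  ultimately show ?thesis by simp
qed

end

lemma ode_exists:
  fixes F :: "'a::banach \<Rightarrow> 'a"
  assumes "L-lipschitz_on UNIV F"
  shows "\<exists>x. x 0 = x0 \<and> (\<forall>t\<ge>0. (x has_vector_derivative F (x t)) (at t within {0..}))"
proof -
  have "(max L 1)-lipschitz_on UNIV F" using assms by (rule lipschitz_on_mono) auto
  then interpret picard F "max L 1" x0 by unfold_locales auto
  show ?thesis using xs0 xs_deriv by blast
qed




definition BL :: "'a::metric_space set \<Rightarrow> ('a \<Rightarrow> real) \<Rightarrow> bool" where
  "BL U f \<longleftrightarrow> (\<exists>L. L-lipschitz_on U f) \<and> (\<exists>A. \<forall>x\<in>U. \<bar>f x\<bar> \<le> A)"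

lemma BL_const: "BL U (\<lambda>x. c)"
  unfolding BL_def using lipschitz_on_constant by blast

lemma BL_add: "BL U f \<Longrightarrow> BL U g \<Longrightarrow> BL U (\<lambda>x. f x + g x)"
  unfolding BL_def
proof (elim conjE exE, intro conjI)
  fix L1 L2 A1 A2 assume "L1-lipschitz_on U f" "L2-lipschitz_on U g"
    "\<forall>x\<in>U. \<bar>f x\<bar> \<le> A1" "\<forall>x\<in>U. \<bar>g x\<bar> \<le> A2"
  then show "\<exists>L. L-lipschitz_on U (\<lambda>x. f x + g x)" "\<exists>A. \<forall>x\<in>U. \<bar>f x + g x\<bar> \<le> A"
    by (blast intro: lipschitz_on_add,
        auto intro!: exI[of _ "A1 + A2"] abs_triangle_ineq[THEN order_trans] add_mono)
qed

lemma BL_uminus: "BL U f \<Longrightarrow> BL U (\<lambda>x. - f x)"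
  unfolding BL_def by (auto intro: lipschitz_on_minus)

lemma BL_diff: "BL U f \<Longrightarrow> BL U g \<Longrightarrow> BL U (\<lambda>x. f x - g x)"
  using BL_add[of U f "\<lambda>x. - g x"] BL_uminus[of U g] by simp

lemma BL_mult: "BL U f \<Longrightarrow> BL U g \<Longrightarrow> BL U (\<lambda>x. f x * g x)"
  unfolding BL_def
proof (elim conjE exE, intro conjI)
  fix L1 L2 A1 A2 assume l1: "L1-lipschitz_on U f" and l2: "L2-lipschitz_on U g"
    and a1: "\<forall>x\<in>U. \<bar>f x\<bar> \<le> A1" and a2: "\<forall>x\<in>U. \<bar>g x\<bar> \<le> A2"
  then show "\<exists>A. \<forall>x\<in>U. \<bar>f x * g x\<bar> \<le> A"
    by (auto intro!: exI[of _ "A1 * A2"] simp: abs_mult mult_mono')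
  have L1: "L1 \<ge> 0" "L2 \<ge> 0" using l1 l2 lipschitz_on_nonneg by auto
  show "\<exists>L. L-lipschitz_on U (\<lambda>x. f x * g x)"
  proof (rule exI[of _ "\<bar>A1\<bar> * L2 + \<bar>A2\<bar> * L1"], rule lipschitz_onI)
    fix x y assume x: "x \<in> U" and y: "y \<in> U"
    have A0: "A1 \<ge> 0" "A2 \<ge> 0" using a1 a2 x by (auto intro: order_trans[OF abs_ge_zero])
    have "dist (f x * g x) (f y * g y) = \<bar>f x * (g x - g y) + g y * (f x - f y)\<bar>"
      by (simp add: dist_real_def algebra_simps)
    also have "\<dots> \<le> \<bar>f x\<bar> * \<bar>g x - g y\<bar> + \<bar>g y\<bar> * \<bar>f x - f y\<bar>"
      by (metis abs_mult abs_triangle_ineq)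
    also have "\<dots> \<le> A1 * (L2 * dist x y) + A2 * (L1 * dist x y)"
    proof (intro add_mono mult_mono)
      show "\<bar>g x - g y\<bar> \<le> L2 * dist x y" using lipschitz_onD[OF l2 x y] by (simp add: dist_real_def)
      show "\<bar>f x - f y\<bar> \<le> L1 * dist x y" using lipschitz_onD[OF l1 x y] by (simp add: dist_real_def)
    qed (use a1 a2 x y A0 L1 in auto)
    also have "\<dots> = (A1 * L2 + A2 * L1) * dist x y" by (simp add: algebra_simps)
    finally have "dist (f x * g x) (f y * g y) \<le> (A1 * L2 + A2 * L1) * dist x y" .
    then show "dist (f x * g x) (f y * g y) \<le> (\<bar>A1\<bar> * L2 + \<bar>A2\<bar> * L1) * dist x y" using A0 by simp
  next
    show "0 \<le> \<bar>A1\<bar> * L2 + \<bar>A2\<bar> * L1" using L1 by simp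
  qed
qed

lemma BL_inverse:
  assumes "BL U f" "c > 0" "\<And>x. x \<in> U \<Longrightarrow> \<bar>f x\<bar> \<ge> c"
  shows "BL U (\<lambda>x. 1 / f x)"
  using assms(1) unfolding BL_def
proof (elim conjE exE, intro conjI)
  fix L1 assume l1: "L1-lipschitz_on U f"
  have L1: "L1 \<ge> 0" using l1 lipschitz_on_nonneg by auto
  show "\<exists>A. \<forall>x\<in>U. \<bar>1 / f x\<bar> \<le> A"
  proof (intro exI ballI)
    fix x assume "x \<in> U"
    then have "\<bar>f x\<bar> \<ge> c" by (rule assms(3))
    then show "\<bar>1 / f x\<bar> \<le> 1 / c" using assms(2) by (simp add: frac_le)
  qed
  show "\<exists>L. L-lipschitz_on U (\<lambda>x. 1 / f x)"
  proof (rule exI[of _ "L1 / (c * c)"], rule lipschitz_onI)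
    fix x y assume x: "x \<in> U" and y: "y \<in> U"
    have cx: "\<bar>f x\<bar> \<ge> c" "\<bar>f y\<bar> \<ge> c" using assms(3) x y by auto
    then have nz: "f x \<noteq> 0" "f y \<noteq> 0" using assms(2) by auto
    have "1 / f x - 1 / f y = (f y - f x) / (f x * f y)" using nz by (simp add: field_simps)
    then have "dist (1 / f x) (1 / f y) = \<bar>f y - f x\<bar> / (\<bar>f x\<bar> * \<bar>f y\<bar>)"
      by (simp add: dist_real_def abs_mult)
    also have "\<dots> \<le> \<bar>f y - f x\<bar> / (c * c)"
      using cx assms(2) by (intro divide_left_mono mult_mono) auto
    also have "\<bar>f y - f x\<bar> \<le> L1 * dist x y"
      using lipschitz_onD[OF l1 x y] by (simp add: dist_real_def abs_minus_commute)
    then have "\<bar>f y - f x\<bar> / (c * c) \<le> L1 * dist x y / (c * c)"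
      using assms(2) by (intro divide_right_mono) auto
    finally show "dist (1 / f x) (1 / f y) \<le> L1 / (c * c) * dist x y" by simp
  next
    show "0 \<le> L1 / (c * c)" using L1 by simp
  qed
qed

lemma BL_divide:
  assumes "BL U f" "BL U g" "c > 0" "\<And>x. x \<in> U \<Longrightarrow> \<bar>g x\<bar> \<ge> c"
  shows "BL U (\<lambda>x. f x / g x)"
  using BL_mult[OF assms(1) BL_inverse[OF assms(2-4)]] by simp

lemma BL_1lip:
  assumes "1-lipschitz_on U f" "\<And>x. x \<in> U \<Longrightarrow> \<bar>f x\<bar> \<le> R"
  shows "BL U f"
  using assms unfolding BL_def by blast

lemma BL_lip: "BL U f \<Longrightarrow> \<exists>L. L-lipschitz_on U f"
  unfolding BL_def by blast

lemma lip4: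
  assumes "BL U f1" "BL U f2" "BL U f3" "BL U f4"
  shows "\<exists>L. L-lipschitz_on U (\<lambda>x. (f1 x, f2 x, f3 x, f4 x))"
proof -
  obtain L1 L2 L3 L4 where "L1-lipschitz_on U f1" "L2-lipschitz_on U f2" "L3-lipschitz_on U f3" "L4-lipschitz_on U f4"
    using BL_lip[OF assms(1)] BL_lip[OF assms(2)] BL_lip[OF assms(3)] BL_lip[OF assms(4)] by blast
  from lipschitz_on_Pair[OF this(1) lipschitz_on_Pair[OF this(2) lipschitz_on_Pair[OF this(3,4)]]]
  show ?thesis by blast
qed

lemma lip_fst: "1-lipschitz_on U (\<lambda>x::'a::metric_space \<times> 'b::metric_space. fst x)"
  by (rule lipschitz_onI) (auto simp: dist_fst_le)

lemma lip_snd: "1-lipschitz_on U (\<lambda>x::'a::metric_space \<times> 'b::metric_space. snd x)"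
  by (rule lipschitz_onI) (auto simp: dist_snd_le)

lemma lip_comp1:
  assumes "1-lipschitz_on UNIV f" "1-lipschitz_on U g"
  shows "1-lipschitz_on U (\<lambda>x. f (g x))"
  using lipschitz_on_compose2[OF assms(2) lipschitz_on_subset[OF assms(1)]] by simp




lemma exp_neg_lim:
  assumes "c > 0" shows "((\<lambda>t::real. exp (- c * t)) \<longlongrightarrow> 0) at_top"
proof -
  have "LIM t at_top. c * t :> at_top"
    by (rule filterlim_tendsto_pos_mult_at_top[OF tendsto_const assms filterlim_ident])
  then have "LIM t at_top. - c * t :> at_bot" by (simp add: filterlim_uminus_at_bot)
  then show ?thesis by (rule filterlim_compose[OF exp_at_bot])
qed

lemma BL_max_const:
  assumes "BL U f" shows "BL U (\<lambda>x. max c (f x))"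
  using assms unfolding BL_def
proof (elim conjE exE, intro conjI)
  fix L A assume l: "L-lipschitz_on U f" and a: "\<forall>x\<in>U. \<bar>f x\<bar> \<le> A"
  show "\<exists>A. \<forall>x\<in>U. \<bar>max c (f x)\<bar> \<le> A"
    using a by (intro exI[of _ "\<bar>c\<bar> + A"]) auto
  have L0: "L \<ge> 0" using lipschitz_on_nonneg[OF l] .
  show "\<exists>L. L-lipschitz_on U (\<lambda>x. max c (f x))"
  proof (rule exI[of _ L], rule lipschitz_onI)
    fix x y assume "x \<in> U" "y \<in> U"
    have "dist (max c (f x)) (max c (f y)) \<le> dist (f x) (f y)"
      by (auto simp: dist_real_def max_def)
    also have "\<dots> \<le> L * dist x y" using lipschitz_onD[OF l \<open>x\<in>U\<close> \<open>y\<in>U\<close>] .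
    finally show "dist (max c (f x)) (max c (f y)) \<le> L * dist x y" .
  qed (rule L0)
qed

lemma cl_lip:
  assumes "R \<ge> 0" shows "1-lipschitz_on UNIV (\<lambda>v::real. max 0 (min v R))"
  by (rule lipschitz_onI) (auto simp: dist_real_def)

lemma vd_fst:
  assumes "(X has_vector_derivative v) F"
  shows "((\<lambda>t. fst (X t)) has_vector_derivative fst v) F"
  using has_derivative_fst[OF assms[unfolded has_vector_derivative_def]]
  by (simp add: has_vector_derivative_def)

lemma vd_snd:
  assumes "(X has_vector_derivative v) F"
  shows "((\<lambda>t. snd (X t)) has_vector_derivative snd v) F"
  using has_derivative_snd[OF assms[unfolded has_vector_derivative_def]]
  by (simp add: has_vector_derivative_def)

locale bees =
  fixes b lam gam m mu r n p h beta delta e B0 I0 M0 N0 :: real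
  assumes pos: "b > 0" "lam > 0" "gam > 0" "m > 0" "mu > 0" "r > 0" "n > 0" "p > 0" "h > 0"
    "beta > 0" "delta > 0" "e > 0"
    and init: "(B0, I0, M0, N0) \<in> D0"
begin

definition "f1 B I M N S = b * B / S - lam * B * N - gam * B * I - m * B"
definition "f2 B I M N S = b * I / S + lam * B * N + gam * B * I - (m + mu) * I"
definition "f3 B I M N S = r * (M + N) - n * M - p / (h * S) * M * (M + N) - M * (beta * I + delta * N + e * B)"
definition "f4 B I M N S = - n * N - p / (h * S) * N * (M + N) + beta * M * I + delta * M * N - e * N * B"

definition c1 :: "real \<times> real \<times> real \<times> real \<Rightarrow> real" where "c1 x = fst x"
definition c2 :: "real \<times> real \<times> real \<times> real \<Rightarrow> real" where "c2 x = fst (snd x)"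
definition c3 :: "real \<times> real \<times> real \<times> real \<Rightarrow> real" where "c3 x = fst (snd (snd x))"
definition c4 :: "real \<times> real \<times> real \<times> real \<Rightarrow> real" where "c4 x = snd (snd (snd x))"

lemma c_simps [simp]: "c1 (B, I, M, N) = B" "c2 (B, I, M, N) = I" "c3 (B, I, M, N) = M" "c4 (B, I, M, N) = N"
  by (simp_all add: c1_def c2_def c3_def c4_def)

lemma c_lip: "1-lipschitz_on U c1" "1-lipschitz_on U c2" "1-lipschitz_on U c3" "1-lipschitz_on U c4"
  unfolding c1_def[abs_def] c2_def[abs_def] c3_def[abs_def] c4_def[abs_def]
  by (rule lip_fst lip_comp1[OF lip_fst lip_snd] lip_comp1[OF lip_fst lip_comp1[OF lip_snd lip_snd]]
      lip_comp1[OF lip_snd lip_comp1[OF lip_snd lip_snd]])+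

definition FF :: "real \<times> real \<times> real \<times> real \<Rightarrow> real \<times> real \<times> real \<times> real" where
  "FF x = (f1 (c1 x) (c2 x) (c3 x) (c4 x) (c1 x + c2 x), f2 (c1 x) (c2 x) (c3 x) (c4 x) (c1 x + c2 x),
           f3 (c1 x) (c2 x) (c3 x) (c4 x) (c1 x + c2 x), f4 (c1 x) (c2 x) (c3 x) (c4 x) (c1 x + c2 x))"

lemma BL_f:
  assumes "BL U B" "BL U I" "BL U M" "BL U N" "BL U S" "c > 0" "\<And>x. x \<in> U \<Longrightarrow> \<bar>S x\<bar> \<ge> c"
  shows "BL U (\<lambda>x. f1 (B x) (I x) (M x) (N x) (S x))" "BL U (\<lambda>x. f2 (B x) (I x) (M x) (N x) (S x))"
    "BL U (\<lambda>x. f3 (B x) (I x) (M x) (N x) (S x))" "BL U (\<lambda>x. f4 (B x) (I x) (M x) (N x) (S x))"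
proof -
  have d1: "BL U (\<lambda>x. b * B x / S x)" "BL U (\<lambda>x. b * I x / S x)"
    by (rule BL_divide[OF BL_mult[OF BL_const] assms(5,6)], simp_all add: assms)+
  have hS: "\<bar>h * S x\<bar> \<ge> h * c" if "x \<in> U" for x
    using assms(7)[OF that] pos(9) by (simp add: abs_mult)
  have d2: "BL U (\<lambda>x. p / (h * S x))"
    by (rule BL_divide[OF BL_const BL_mult[OF BL_const assms(5)], of "h * c"]) (use hS pos(9) assms(6) in auto)
  note R = BL_add BL_diff BL_mult BL_const BL_uminus assms(1-4) d1 d2
  show "BL U (\<lambda>x. f1 (B x) (I x) (M x) (N x) (S x))" unfolding f1_def by (intro R)
  show "BL U (\<lambda>x. f2 (B x) (I x) (M x) (N x) (S x))" unfolding f2_def by (intro R)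
  show "BL U (\<lambda>x. f3 (B x) (I x) (M x) (N x) (S x))" unfolding f3_def by (intro R)
  show "BL U (\<lambda>x. f4 (B x) (I x) (M x) (N x) (S x))" unfolding f4_def by (intro R)
qed

definition "s1 = min (B0 + I0) (b / (m + mu))"
definition "s2 = max (B0 + I0) (b / m)"
definition "T2 = max (M0 + N0) (h * s2 * r / p)"
definition "R = max s2 T2"
definition "cl v = max 0 (min v R)"

lemma init_nn: "B0 \<ge> 0" "I0 \<ge> 0" "M0 \<ge> 0" "N0 \<ge> 0" "B0 + I0 > 0"
  using init by (auto simp: D0_def)

lemma kconsts: "s1 > 0" "s1 \<le> b / (m + mu)" "s1 \<le> B0 + I0" "B0 + I0 \<le> s2" "b / m \<le> s2"
  "s1 < b / m" "s2 \<le> R" "T2 \<le> R" "M0 + N0 \<le> T2" "h * s2 * r / p \<le> T2" "T2 > 0" "R \<ge> 0" "s1 \<le> s2"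
  "s2 > 0"
proof -
  have bb: "b / (m + mu) < b / m" using pos by (intro divide_strict_left_mono) auto
  have "b / (m + mu) > 0" using pos by simp
  then show "s1 > 0" using init_nn by (simp add: s1_def)
  show "s1 \<le> b / (m + mu)" "s1 \<le> B0 + I0" "B0 + I0 \<le> s2" "b / m \<le> s2" "s2 \<le> R" "T2 \<le> R"
    "M0 + N0 \<le> T2" "h * s2 * r / p \<le> T2"
    by (auto simp: s1_def s2_def R_def T2_def)
  show "s1 < b / m" using bb by (simp add: s1_def)
  show "s2 > 0" using pos by (simp add: s2_def less_max_iff_disj)
  then have "h * s2 * r / p > 0" using pos by simp
  then show "T2 > 0" by (simp add: T2_def less_max_iff_disj)
  then show "R \<ge> 0" by (simp add: R_def)
  show "s1 \<le> s2" using bb by (simp add: s1_def s2_def)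
qed

lemma cl_nn: "cl v \<ge> 0" by (simp add: cl_def)
lemma cl_le: "cl v \<le> R" using kconsts(12) by (simp add: cl_def)
lemma cl_neg: "v \<le> 0 \<Longrightarrow> cl v = 0" using kconsts(12) by (simp add: cl_def)
lemma cl_id: "0 \<le> v \<Longrightarrow> v \<le> R \<Longrightarrow> cl v = v" by (simp add: cl_def)
lemma cl_big: "0 \<le> v \<Longrightarrow> cl v \<ge> min v R" by (simp add: cl_def)
lemma cl_small: "0 \<le> v \<Longrightarrow> cl v \<le> v" by (simp add: cl_def)

definition GG :: "real \<times> real \<times> real \<times> real \<Rightarrow> real \<times> real \<times> real \<times> real" where
  "GG x = (let u = cl (c1 x); v = cl (c2 x); w = cl (c3 x); z = cl (c4 x); S = max s1 (u + v) in
     (f1 u v w z S, f2 u v w z S, f3 u v w z S, f4 u v w z S))"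

lemma GG_lip: "\<exists>L. L-lipschitz_on UNIV GG"
proof -
  have C: "BL UNIV (\<lambda>x. cl (c1 x))" "BL UNIV (\<lambda>x. cl (c2 x))" "BL UNIV (\<lambda>x. cl (c3 x))" "BL UNIV (\<lambda>x. cl (c4 x))"
    by (rule BL_1lip[OF lip_comp1[OF cl_lip[OF kconsts(12), folded cl_def] c_lip(1)], of _ R]
          BL_1lip[OF lip_comp1[OF cl_lip[OF kconsts(12), folded cl_def] c_lip(2)], of _ R]
          BL_1lip[OF lip_comp1[OF cl_lip[OF kconsts(12), folded cl_def] c_lip(3)], of _ R]
          BL_1lip[OF lip_comp1[OF cl_lip[OF kconsts(12), folded cl_def] c_lip(4)], of _ R];
        simp add: cl_nn cl_le abs_of_nonneg)+
  have S: "BL UNIV (\<lambda>x. max s1 (cl (c1 x) + cl (c2 x)))" by (intro BL_max_const BL_add C)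
  have Sb: "\<bar>max s1 (cl (c1 x) + cl (c2 x))\<bar> \<ge> s1" for x using kconsts(1) by auto
  show ?thesis unfolding GG_def Let_def
    by (rule lip4; rule BL_f[OF C S kconsts(1)]) (use Sb in auto)
qed

lemma sum12: "f1 u v w z S + f2 u v w z S = b * (u + v) / S - m * (u + v) - mu * v"
  by (simp add: f1_def f2_def add_divide_distrib algebra_simps)

lemma sum34: "f3 u v w z S + f4 u v w z S = (w + z) * ((r - n) - p / (h * S) * (w + z) - e * u)"
proof -
  have "\<And>q. r * (w + z) - n * w - q * w * (w + z) - w * (beta * v + delta * z + e * u) + (- n * z - q * z * (w + z) + beta * w * v + delta * w * z - e * z * u)
     = (w + z) * ((r - n) - q * (w + z) - e * u)" by (simp add: algebra_simps)
  from this[of "p / (h * S)"] show ?thesis by (simp add: f3_def f4_def)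
qed

lemma alg_up:
  assumes "B \<ge> 0" "I \<ge> 0" "B + I > s2"
  shows "f1 (cl B) (cl I) w z (max s1 (cl B + cl I)) + f2 (cl B) (cl I) w z (max s1 (cl B + cl I)) \<le> 0"
proof -
  define u where "u = cl B"
  define v where "v = cl I"
  have uv: "u \<ge> 0" "v \<ge> 0" by (simp_all add: u_def v_def cl_nn)
  have "u + v \<ge> s2"
  proof (cases "B \<le> R \<and> I \<le> R")
    case True then show ?thesis using assms by (simp add: u_def v_def cl_id)
  next
    case False
    then show ?thesis using cl_big[OF assms(1)] cl_big[OF assms(2)] kconsts(7) uv
      unfolding u_def v_def by linarith
  qed
  then have S: "max s1 (u + v) = u + v" "u + v > 0" using kconsts(13,14) by auto
  have "f1 u v w z (max s1 (u + v)) + f2 u v w z (max s1 (u + v)) = b - m * (u + v) - mu * v"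
    unfolding sum12 S(1) using S(2) by simp
  also have "\<dots> \<le> b - m * s2" using \<open>u + v \<ge> s2\<close> uv pos by (smt (verit) mult_left_mono mult_nonneg_nonneg)
  also have "\<dots> \<le> 0" using kconsts(5) pos by (simp add: field_simps)
  finally show ?thesis by (simp add: u_def v_def)
qed

lemma alg_low:
  assumes "B \<ge> 0" "I \<ge> 0" "B + I < s1"
  shows "f1 (cl B) (cl I) w z (max s1 (cl B + cl I)) + f2 (cl B) (cl I) w z (max s1 (cl B + cl I)) \<ge> 0"
proof -
  have id: "cl B = B" "cl I = I" using assms kconsts(7,13) by (auto intro!: cl_id)
  have S: "max s1 (B + I) = s1" using assms by simp
  have "(m + mu) * (B + I) \<le> b / s1 * (B + I)"
  proof (rule mult_right_mono)
    show "m + mu \<le> b / s1" using kconsts(1,2) pos by (simp add: field_simps)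
  qed (use assms in simp)
  moreover have "mu * B \<ge> 0" using assms pos by simp
  ultimately have "b * (B + I) / s1 - m * (B + I) - mu * I \<ge> 0" by (simp add: algebra_simps)
  then show ?thesis unfolding id S sum12 .
qed

lemma alg_T:
  assumes "B \<ge> 0" "I \<ge> 0" "M \<ge> 0" "N \<ge> 0" "B + I \<le> s2" "M + N > T2"
  shows "f3 (cl B) (cl I) (cl M) (cl N) (max s1 (cl B + cl I)) + f4 (cl B) (cl I) (cl M) (cl N) (max s1 (cl B + cl I)) \<le> 0"
proof -
  define u where "u = cl B"
  define v where "v = cl I"
  define w where "w = cl M"
  define z where "z = cl N"
  define S where "S = max s1 (u + v)"
  have uv: "u \<ge> 0" "v \<ge> 0" "w \<ge> 0" "z \<ge> 0" by (simp_all add: u_def v_def w_def z_def cl_nn)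
  have "w + z \<ge> T2"
  proof (cases "M \<le> R \<and> N \<le> R")
    case True then show ?thesis using assms by (simp add: w_def z_def cl_id)
  next
    case False
    then show ?thesis using cl_big[OF assms(3)] cl_big[OF assms(4)] kconsts(8) uv
      unfolding w_def z_def by linarith
  qed
  have "u + v \<le> s2" using cl_small[OF assms(1)] cl_small[OF assms(2)] assms(5) unfolding u_def v_def by linarith
  then have S: "S \<le> s2" "S \<ge> s1" "S > 0" using kconsts(1,13) by (auto simp: S_def)
  have "p / (h * S) * (w + z) \<ge> p / (h * s2) * T2"
  proof (rule mult_mono)
    show "p / (h * s2) \<le> p / (h * S)" using S pos by (intro divide_left_mono mult_left_mono mult_pos_pos) auto
  qed (use \<open>w + z \<ge> T2\<close> pos S kconsts(11) in auto)
  moreover have "p / (h * s2) * T2 \<ge> r"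
  proof -
    have "p / (h * s2) * T2 \<ge> p / (h * s2) * (h * s2 * r / p)"
      using kconsts(10,14) pos by (intro mult_left_mono) auto
    also have "p / (h * s2) * (h * s2 * r / p) = r" using kconsts(14) pos by (simp add: field_simps)
    finally show ?thesis .
  qed
  ultimately have "(r - n) - p / (h * S) * (w + z) - e * u \<le> 0" using pos uv by (smt (verit) mult_nonneg_nonneg)
  then have "(w + z) * ((r - n) - p / (h * S) * (w + z) - e * u) \<le> 0"
    using uv by (simp add: mult_nonneg_nonpos)
  then show ?thesis unfolding sum34 S_def u_def v_def w_def z_def .
qed

end



context bees begin

lemma real_deriv_of_vd:
  assumes "(X has_vector_derivative v) F"
  shows "((\<lambda>t. c1 (X t)) has_real_derivative c1 v) F" "((\<lambda>t. c2 (X t)) has_real_derivative c2 v) F"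
    "((\<lambda>t. c3 (X t)) has_real_derivative c3 v) F" "((\<lambda>t. c4 (X t)) has_real_derivative c4 v) F"
  unfolding c1_def c2_def c3_def c4_def has_real_derivative_iff_has_vector_derivative
  by (intro vd_fst vd_snd assms)+

lemma exists_sol:
  "\<exists>B I M N. bee_solution b lam gam m mu r n p h beta delta e B I M N \<and>
     B 0 = B0 \<and> I 0 = I0 \<and> M 0 = M0 \<and> N 0 = N0 \<and>
     (\<forall>t\<ge>0. B t \<ge> 0 \<and> I t \<ge> 0 \<and> M t \<ge> 0 \<and> N t \<ge> 0 \<and> s1 \<le> B t + I t \<and> B t + I t \<le> s2 \<and> M t + N t \<le> T2)"
proof -
  obtain L where L: "L-lipschitz_on UNIV GG" using GG_lip by blast
  obtain X where X0: "X 0 = (B0, I0, M0, N0)"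
    and dX: "\<And>t. t \<ge> 0 \<Longrightarrow> (X has_vector_derivative GG (X t)) (at t within {0..})"
    using ode_exists[OF L] by blast
  define Bx where "Bx t = c1 (X t)" for t
  define Ix where "Ix t = c2 (X t)" for t
  define Mx where "Mx t = c3 (X t)" for t
  define Nx where "Nx t = c4 (X t)" for t
  define sg where "sg t = max s1 (cl (Bx t) + cl (Ix t))" for t
  define g1 where "g1 t = f1 (cl (Bx t)) (cl (Ix t)) (cl (Mx t)) (cl (Nx t)) (sg t)" for t
  define g2 where "g2 t = f2 (cl (Bx t)) (cl (Ix t)) (cl (Mx t)) (cl (Nx t)) (sg t)" for t
  define g3 where "g3 t = f3 (cl (Bx t)) (cl (Ix t)) (cl (Mx t)) (cl (Nx t)) (sg t)" for t
  define g4 where "g4 t = f4 (cl (Bx t)) (cl (Ix t)) (cl (Mx t)) (cl (Nx t)) (sg t)" for t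
  have GGX: "GG (X t) = (g1 t, g2 t, g3 t, g4 t)" for t
    by (simp add: GG_def Let_def g1_def g2_def g3_def g4_def sg_def Bx_def Ix_def Mx_def Nx_def)
  have dB: "(Bx has_real_derivative g1 t) (at t within {0..})"
   and dI: "(Ix has_real_derivative g2 t) (at t within {0..})"
   and dM: "(Mx has_real_derivative g3 t) (at t within {0..})"
   and dN: "(Nx has_real_derivative g4 t) (at t within {0..})" if "t \<ge> 0" for t
    using real_deriv_of_vd[OF dX[OF that]] unfolding GGX
    by (simp_all add: Bx_def[abs_def] Ix_def[abs_def] Mx_def[abs_def] Nx_def[abs_def])
  have x0: "Bx 0 = B0" "Ix 0 = I0" "Mx 0 = M0" "Nx 0 = N0"
    by (simp_all add: Bx_def Ix_def Mx_def Nx_def X0)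
  have sgp: "sg t \<ge> s1" for t by (simp add: sg_def)
  have Bp: "Bx t \<ge> 0" if "t \<ge> 0" for t
  proof (rule barrier[OF dB _ _ that])
    show "0 \<le> Bx 0" using x0 init_nn by simp
    fix s :: real assume "0 \<le> s" "Bx s < 0"
    then show "0 \<le> g1 s" by (simp add: g1_def f1_def cl_neg)
  qed
  have Ip: "Ix t \<ge> 0" if "t \<ge> 0" for t
  proof (rule barrier[OF dI _ _ that])
    show "0 \<le> Ix 0" using x0 init_nn by simp
    fix s :: real assume "0 \<le> s" "Ix s < 0"
    then show "0 \<le> g2 s" using pos by (simp add: g2_def f2_def cl_neg cl_nn)
  qed
  have Mp: "Mx t \<ge> 0" if "t \<ge> 0" for t
  proof (rule barrier[OF dM _ _ that])
    show "0 \<le> Mx 0" using x0 init_nn by simp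
    fix s :: real assume "0 \<le> s" "Mx s < 0"
    then show "0 \<le> g3 s" using pos by (simp add: g3_def f3_def cl_neg cl_nn)
  qed
  have Np: "Nx t \<ge> 0" if "t \<ge> 0" for t
  proof (rule barrier[OF dN _ _ that])
    show "0 \<le> Nx 0" using x0 init_nn by simp
    fix s :: real assume "0 \<le> s" "Nx s < 0"
    then show "0 \<le> g4 s" using pos by (simp add: g4_def f4_def cl_neg cl_nn)
  qed
  have dS: "((\<lambda>t. Bx t + Ix t) has_real_derivative g1 t + g2 t) (at t within {0..})" if "t \<ge> 0" for t
    using dB[OF that] dI[OF that] by (rule DERIV_add)
  have dmS: "((\<lambda>t. - (Bx t + Ix t)) has_real_derivative - (g1 t + g2 t)) (at t within {0..})" if "t \<ge> 0" for t
    using dS[OF that] by (rule DERIV_minus)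
  have Sup: "Bx t + Ix t \<le> s2" if "t \<ge> 0" for t
  proof -
    have "- (Bx t + Ix t) \<ge> - s2"
    proof (rule barrier[OF dmS _ _ that])
      show "- s2 \<le> - (Bx 0 + Ix 0)" using x0 kconsts(4) by simp
      fix s :: real assume s: "0 \<le> s" "- (Bx s + Ix s) < - s2"
      have "g1 s + g2 s \<le> 0"
        using alg_up[OF Bp[OF s(1)] Ip[OF s(1)], of "cl (Mx s)" "cl (Nx s)"] s(2) by (simp add: g1_def g2_def sg_def)
      then show "0 \<le> - (g1 s + g2 s)" by simp
    qed
    then show ?thesis by simp
  qed
  have Slow: "Bx t + Ix t \<ge> s1" if "t \<ge> 0" for t
  proof (rule barrier[OF dS _ _ that])
    show "s1 \<le> Bx 0 + Ix 0" using x0 kconsts(3) by simp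
    fix s :: real assume "0 \<le> s" "Bx s + Ix s < s1"
    then show "0 \<le> g1 s + g2 s"
      using alg_low[of "Bx s" "Ix s"] Bp Ip by (simp add: g1_def g2_def sg_def)
  qed
  have dmT: "((\<lambda>t. - (Mx t + Nx t)) has_real_derivative - (g3 t + g4 t)) (at t within {0..})" if "t \<ge> 0" for t
    using DERIV_add[OF dM[OF that] dN[OF that]] by (rule DERIV_minus)
  have Tup: "Mx t + Nx t \<le> T2" if "t \<ge> 0" for t
  proof -
    have "- (Mx t + Nx t) \<ge> - T2"
    proof (rule barrier[OF dmT _ _ that])
      show "- T2 \<le> - (Mx 0 + Nx 0)" using x0 kconsts(9) by simp
      fix s :: real assume s: "0 \<le> s" "- (Mx s + Nx s) < - T2"
      then show "0 \<le> - (g3 s + g4 s)"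
        using alg_T[of "Bx s" "Ix s" "Mx s" "Nx s"] Bp Ip Mp Np Sup by (simp add: g3_def g4_def sg_def)
    qed
    then show ?thesis by simp
  qed
  have inK: "cl (Bx t) = Bx t" "cl (Ix t) = Ix t" "cl (Mx t) = Mx t" "cl (Nx t) = Nx t" "sg t = Bx t + Ix t"
    if "t \<ge> 0" for t
  proof -
    have a: "Bx t \<le> R" "Ix t \<le> R" "Mx t \<le> R" "Nx t \<le> R"
      using Bp[OF that] Ip[OF that] Mp[OF that] Np[OF that] Sup[OF that] Tup[OF that] kconsts(7,8) by linarith+
    show "cl (Bx t) = Bx t" "cl (Ix t) = Ix t" "cl (Mx t) = Mx t" "cl (Nx t) = Nx t"
      using a Bp[OF that] Ip[OF that] Mp[OF that] Np[OF that] by (simp_all add: cl_id)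
    then show "sg t = Bx t + Ix t" using Slow[OF that] by (simp add: sg_def)
  qed
  have sol: "bee_solution b lam gam m mu r n p h beta delta e Bx Ix Mx Nx"
    unfolding bee_solution_def
  proof (intro allI impI conjI)
    fix t :: real assume t: "0 \<le> t"
    show "Bx t + Ix t \<noteq> 0" using Slow[OF t] kconsts(1) by simp
    show "(Bx has_real_derivative b * Bx t / (Bx t + Ix t) - lam * Bx t * Nx t - gam * Bx t * Ix t - m * Bx t) (at t within {0..})"
      using dB[OF t] by (simp add: g1_def inK[OF t] f1_def)
    show "(Ix has_real_derivative b * Ix t / (Bx t + Ix t) + lam * Bx t * Nx t + gam * Bx t * Ix t - (m + mu) * Ix t) (at t within {0..})"
      using dI[OF t] by (simp add: g2_def inK[OF t] f2_def)
    show "(Mx has_real_derivative r * (Mx t + Nx t) - n * Mx t - p / (h * (Bx t + Ix t)) * Mx t * (Mx t + Nx t) - Mx t * (beta * Ix t + delta * Nx t + e * Bx t)) (at t within {0..})"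
      using dM[OF t] by (simp add: g3_def inK[OF t] f3_def)
    show "(Nx has_real_derivative - n * Nx t - p / (h * (Bx t + Ix t)) * Nx t * (Mx t + Nx t) + beta * Mx t * Ix t + delta * Mx t * Nx t - e * Nx t * Bx t) (at t within {0..})"
      using dN[OF t] by (simp add: g4_def inK[OF t] f4_def)
  qed
  show ?thesis
    by (rule exI[of _ Bx], rule exI[of _ Ix], rule exI[of _ Mx], rule exI[of _ Nx])
       (use sol x0 Bp Ip Mp Np Slow Sup Tup in auto)
qed

end



lemma cont_bound:
  fixes f :: "real \<Rightarrow> real"
  assumes "continuous_on {0..t} f"
  shows "\<exists>a. \<forall>s\<in>{0..t}. \<bar>f s\<bar> \<le> a"
proof -
  have "bounded (f ` {0..t})" by (rule compact_imp_bounded[OF compact_continuous_image[OF assms compact_Icc]])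
  then obtain a where "\<forall>x\<in>f ` {0..t}. \<bar>x\<bar> \<le> a" unfolding bounded_real by blast
  then show ?thesis by auto
qed

lemma cont_lowbound:
  fixes f :: "real \<Rightarrow> real"
  assumes "continuous_on {0..t} f" "0 \<le> t" "\<And>s. s \<in> {0..t} \<Longrightarrow> f s \<noteq> 0"
  shows "\<exists>c>0. \<forall>s\<in>{0..t}. \<bar>f s\<bar> \<ge> c"
proof -
  have "continuous_on {0..t} (\<lambda>s. \<bar>f s\<bar>)" using assms(1) by (rule continuous_on_rabs)
  moreover have "{0..t} \<noteq> {}" using assms(2) by simp
  ultimately obtain s0 where s0: "s0 \<in> {0..t}" "\<forall>s\<in>{0..t}. \<bar>f s0\<bar> \<le> \<bar>f s\<bar>"
    using continuous_attains_inf[OF compact_Icc] by blast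
  then show ?thesis using assms(3)[OF s0(1)] by (intro exI[of _ "\<bar>f s0\<bar>"]) auto
qed

context bees begin

lemma sol_derivs:
  assumes "bee_solution b lam gam m mu r n p h beta delta e B I M N" "0 \<le> t"
  shows "(B has_real_derivative f1 (B t) (I t) (M t) (N t) (B t + I t)) (at t within {0..})"
    "(I has_real_derivative f2 (B t) (I t) (M t) (N t) (B t + I t)) (at t within {0..})"
    "(M has_real_derivative f3 (B t) (I t) (M t) (N t) (B t + I t)) (at t within {0..})"
    "(N has_real_derivative f4 (B t) (I t) (M t) (N t) (B t + I t)) (at t within {0..})"
    "B t + I t \<noteq> 0"
proof -
  have H: "B t + I t \<noteq> 0 \<and>
      (B has_real_derivative
         (b * B t / (B t + I t) - lam * B t * N t - gam * B t * I t - m * B t)) (at t within {0..}) \<and>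
      (I has_real_derivative
         (b * I t / (B t + I t) + lam * B t * N t + gam * B t * I t - (m + mu) * I t)) (at t within {0..}) \<and>
      (M has_real_derivative
         (r * (M t + N t) - n * M t - p / (h * (B t + I t)) * M t * (M t + N t)
          - M t * (beta * I t + delta * N t + e * B t))) (at t within {0..}) \<and>
      (N has_real_derivative
         (- n * N t - p / (h * (B t + I t)) * N t * (M t + N t) + beta * M t * I t
          + delta * M t * N t - e * N t * B t)) (at t within {0..})"
    using assms(1) assms(2) unfolding bee_solution_def by blast
  then show "(B has_real_derivative f1 (B t) (I t) (M t) (N t) (B t + I t)) (at t within {0..})"
    "(I has_real_derivative f2 (B t) (I t) (M t) (N t) (B t + I t)) (at t within {0..})"
    "(M has_real_derivative f3 (B t) (I t) (M t) (N t) (B t + I t)) (at t within {0..})"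
    "(N has_real_derivative f4 (B t) (I t) (M t) (N t) (B t + I t)) (at t within {0..})"
    "B t + I t \<noteq> 0"
    unfolding f1_def f2_def f3_def f4_def by blast+
qed

lemma sol_vd:
  assumes "bee_solution b lam gam m mu r n p h beta delta e B I M N" "0 \<le> t"
  shows "((\<lambda>s. (B s, I s, M s, N s)) has_vector_derivative FF (B t, I t, M t, N t)) (at t within {0..})"
proof -
  note d = sol_derivs[OF assms, unfolded has_real_derivative_iff_has_vector_derivative]
  show ?thesis unfolding FF_def c_simps
    by (intro has_vector_derivative_Pair d)
qed

lemma sol_cont:
  assumes "bee_solution b lam gam m mu r n p h beta delta e B I M N"
  shows "continuous_on {0..t} B" "continuous_on {0..t} I" "continuous_on {0..t} M" "continuous_on {0..t} N"
    "continuous_on {0..t} (\<lambda>s. B s + I s)"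
proof -
  show 1: "continuous_on {0..t} B" by (rule deriv_cont_on[OF sol_derivs(1)[OF assms]]) auto
  show 2: "continuous_on {0..t} I" by (rule deriv_cont_on[OF sol_derivs(2)[OF assms]]) auto
  show "continuous_on {0..t} M" by (rule deriv_cont_on[OF sol_derivs(3)[OF assms]]) auto
  show "continuous_on {0..t} N" by (rule deriv_cont_on[OF sol_derivs(4)[OF assms]]) auto
  show "continuous_on {0..t} (\<lambda>s. B s + I s)" using 1 2 by (rule continuous_on_add)
qed

lemma unique:
  assumes sol: "bee_solution b lam gam m mu r n p h beta delta e B I M N"
    and bnd: "\<And>t. t \<ge> 0 \<Longrightarrow> B t \<ge> 0 \<and> I t \<ge> 0 \<and> M t \<ge> 0 \<and> N t \<ge> 0 \<and> s1 \<le> B t + I t \<and> B t + I t \<le> s2 \<and> M t + N t \<le> T2"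
    and sol': "bee_solution b lam gam m mu r n p h beta delta e B' I' M' N'"
    and init': "B' 0 = B 0" "I' 0 = I 0" "M' 0 = M 0" "N' 0 = N 0"
    and t: "0 \<le> t"
  shows "B' t = B t \<and> I' t = I t \<and> M' t = M t \<and> N' t = N t"
proof -
  obtain a1 where a1: "\<forall>s\<in>{0..t}. \<bar>B' s\<bar> \<le> a1" using cont_bound[OF sol_cont(1)[OF sol']] by blast
  obtain a2 where a2: "\<forall>s\<in>{0..t}. \<bar>I' s\<bar> \<le> a2" using cont_bound[OF sol_cont(2)[OF sol']] by blast
  obtain a3 where a3: "\<forall>s\<in>{0..t}. \<bar>M' s\<bar> \<le> a3" using cont_bound[OF sol_cont(3)[OF sol']] by blast
  obtain a4 where a4: "\<forall>s\<in>{0..t}. \<bar>N' s\<bar> \<le> a4" using cont_bound[OF sol_cont(4)[OF sol']] by blast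
  obtain c0 where c0: "c0 > 0" "\<forall>s\<in>{0..t}. \<bar>B' s + I' s\<bar> \<ge> c0"
    using cont_lowbound[OF sol_cont(5)[OF sol'] t] sol_derivs(5)[OF sol'] by auto
  define Rb where "Rb = max R (max (max a1 a2) (max a3 a4))"
  define cc where "cc = min c0 s1"
  have cc: "cc > 0" using c0 kconsts(1) by (simp add: cc_def)
  define U where "U = {x. \<bar>c1 x\<bar> \<le> Rb \<and> \<bar>c2 x\<bar> \<le> Rb \<and> \<bar>c3 x\<bar> \<le> Rb \<and> \<bar>c4 x\<bar> \<le> Rb \<and> \<bar>c1 x + c2 x\<bar> \<ge> cc}"
  have BLc: "BL U c1" "BL U c2" "BL U c3" "BL U c4"
    by (rule BL_1lip[OF c_lip(1), of _ Rb] BL_1lip[OF c_lip(2), of _ Rb] BL_1lip[OF c_lip(3), of _ Rb]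
        BL_1lip[OF c_lip(4), of _ Rb]; simp add: U_def)+
  have BLs: "BL U (\<lambda>x. c1 x + c2 x)" using BLc by (intro BL_add)
  have "\<exists>L. L-lipschitz_on U FF"
    unfolding FF_def[abs_def]
    by (rule lip4; rule BL_f[OF BLc BLs cc]) (auto simp: U_def)
  then obtain L where L: "L-lipschitz_on U FF" by blast
  have XU: "(B s, I s, M s, N s) \<in> U" if "0 \<le> s" "s \<le> t" for s
  proof -
    have b: "B s \<ge> 0 \<and> I s \<ge> 0 \<and> M s \<ge> 0 \<and> N s \<ge> 0 \<and> s1 \<le> B s + I s \<and> B s + I s \<le> s2 \<and> M s + N s \<le> T2"
      using bnd that by auto
    have "R \<le> Rb" by (simp add: Rb_def)
    then show ?thesis using b kconsts(7,8) by (auto simp: U_def cc_def)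
  qed
  have YU: "(B' s, I' s, M' s, N' s) \<in> U" if "0 \<le> s" "s \<le> t" for s
  proof -
    have s': "s \<in> {0..t}" using that by simp
    have le: "a1 \<le> Rb" "a2 \<le> Rb" "a3 \<le> Rb" "a4 \<le> Rb" "cc \<le> c0" by (auto simp: Rb_def cc_def)
    have "\<bar>B' s\<bar> \<le> Rb" "\<bar>I' s\<bar> \<le> Rb" "\<bar>M' s\<bar> \<le> Rb" "\<bar>N' s\<bar> \<le> Rb" "\<bar>B' s + I' s\<bar> \<ge> cc"
      using a1[rule_format, OF s'] a2[rule_format, OF s'] a3[rule_format, OF s'] a4[rule_format, OF s']
        c0(2)[rule_format, OF s'] le by linarith+
    then show ?thesis by (simp add: U_def)
  qed
  have "(B t, I t, M t, N t) = (B' t, I' t, M' t, N' t)"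
  proof (rule ode_unique[where x = "\<lambda>s. (B s, I s, M s, N s)" and y = "\<lambda>s. (B' s, I' s, M' s, N' s)" and F = FF and U = U and L = L and T = t])
    show "((\<lambda>s. (B s, I s, M s, N s)) has_vector_derivative FF (B s, I s, M s, N s)) (at s within {0..})"
      if "0 \<le> s" "s \<le> t" for s using sol_vd[OF sol that(1)] by simp
    show "((\<lambda>s. (B' s, I' s, M' s, N' s)) has_vector_derivative FF (B' s, I' s, M' s, N' s)) (at s within {0..})"
      if "0 \<le> s" "s \<le> t" for s using sol_vd[OF sol' that(1)] by simp
  qed (use XU YU L init' t in auto)
  then show ?thesis by simp
qed

lemma S_deriv:
  assumes sol: "bee_solution b lam gam m mu r n p h beta delta e B I M N" "0 \<le> t"
  shows "((\<lambda>s. B s + I s) has_real_derivative b - m * B t - (m + mu) * I t) (at t within {0..})"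
proof -
  have d: "((\<lambda>s. B s + I s) has_real_derivative f1 (B t) (I t) (M t) (N t) (B t + I t) + f2 (B t) (I t) (M t) (N t) (B t + I t)) (at t within {0..})"
    by (rule DERIV_add[OF sol_derivs(1,2)[OF sol]])
  have ne: "B t + I t \<noteq> 0" using sol_derivs(5)[OF sol] .
  have "f1 (B t) (I t) (M t) (N t) (B t + I t) + f2 (B t) (I t) (M t) (N t) (B t + I t) = b * (B t + I t) / (B t + I t) - m * (B t + I t) - mu * I t"
    by (rule sum12)
  also have "\<dots> = b - m * (B t + I t) - mu * I t" using ne by simp
  also have "\<dots> = b - m * B t - (m + mu) * I t" by (simp add: algebra_simps)
  finally have "f1 (B t) (I t) (M t) (N t) (B t + I t) + f2 (B t) (I t) (M t) (N t) (B t + I t) = b - m * B t - (m + mu) * I t" .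
  then show ?thesis using d by simp
qed

lemma asympt:
  assumes sol: "bee_solution b lam gam m mu r n p h beta delta e B I M N"
    and nn: "\<And>t. t \<ge> 0 \<Longrightarrow> B t \<ge> 0 \<and> I t \<ge> 0"
  shows "ereal (b / (m + mu)) \<le> Liminf at_top (\<lambda>t. ereal (B t + I t))"
    "Limsup at_top (\<lambda>t. ereal (B t + I t)) \<le> ereal (b / m)"
proof -
  define S0 where "S0 = B 0 + I 0"
  have mm: "m + mu > 0" "m > 0" using pos by auto
  have lo: "B t + I t \<ge> b / (m + mu) + (S0 - b / (m + mu)) * exp (- (m + mu) * t)" if "t \<ge> 0" for t
  proof (rule exp_lower[OF S_deriv[OF sol] _ mm(1) that, unfolded S0_def[symmetric]])
    fix s :: real assume "0 \<le> s"
    then have "mu * B s \<ge> 0" using nn pos by simp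
    then show "b - (m + mu) * (B s + I s) \<le> b - m * B s - (m + mu) * I s" by (simp add: algebra_simps)
  qed (simp add: S0_def)
  have up: "- (B t + I t) \<ge> (- b) / m + (- (B 0 + I 0) - (- b) / m) * exp (- m * t)" if "t \<ge> 0" for t
  proof (rule exp_lower[OF DERIV_minus[OF S_deriv[OF sol]] _ mm(2) that])
    fix s :: real assume "0 \<le> s"
    then have "mu * I s \<ge> 0" using nn pos by simp
    then show "- b - m * - (B s + I s) \<le> - (b - m * B s - (m + mu) * I s)" by (simp add: algebra_simps)
  qed
  have "Liminf at_top (\<lambda>t. ereal (b / (m + mu) + (S0 - b / (m + mu)) * exp (- (m + mu) * t))) = ereal (b / (m + mu))"
  proof (rule lim_imp_Liminf)
    have "((\<lambda>t. b / (m + mu) + (S0 - b / (m + mu)) * exp (- (m + mu) * t)) \<longlongrightarrow> b / (m + mu) + (S0 - b / (m + mu)) * 0) at_top"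
      by (intro tendsto_intros exp_neg_lim mm)
    then show "((\<lambda>t. ereal (b / (m + mu) + (S0 - b / (m + mu)) * exp (- (m + mu) * t))) \<longlongrightarrow> ereal (b / (m + mu))) at_top"
      by (simp add: lim_ereal)
  qed simp
  moreover have "Liminf at_top (\<lambda>t. ereal (b / (m + mu) + (S0 - b / (m + mu)) * exp (- (m + mu) * t))) \<le> Liminf at_top (\<lambda>t. ereal (B t + I t))"
    by (rule Liminf_mono) (use lo in \<open>auto intro: eventually_mono[OF eventually_ge_at_top[of 0]]\<close>)
  ultimately show "ereal (b / (m + mu)) \<le> Liminf at_top (\<lambda>t. ereal (B t + I t))" by simp
  have "Limsup at_top (\<lambda>t. ereal (b / m - (- (B 0 + I 0) - (- b) / m) * exp (- m * t))) = ereal (b / m)"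
  proof (rule lim_imp_Limsup)
    have "((\<lambda>t. b / m - (- (B 0 + I 0) - (- b) / m) * exp (- m * t)) \<longlongrightarrow> b / m - (- (B 0 + I 0) - (- b) / m) * 0) at_top"
      by (intro tendsto_intros exp_neg_lim mm)
    then show "((\<lambda>t. ereal (b / m - (- (B 0 + I 0) - (- b) / m) * exp (- m * t))) \<longlongrightarrow> ereal (b / m)) at_top"
      by (simp add: lim_ereal)
  qed simp
  moreover have "Limsup at_top (\<lambda>t. ereal (B t + I t)) \<le> Limsup at_top (\<lambda>t. ereal (b / m - (- (B 0 + I 0) - (- b) / m) * exp (- m * t)))"
  proof (rule Limsup_mono)
    show "\<forall>\<^sub>F t in at_top. ereal (B t + I t) \<le> ereal (b / m - (- (B 0 + I 0) - (- b) / m) * exp (- m * t))"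
    proof (rule eventually_mono[OF eventually_ge_at_top[of 0]])
      fix t :: real assume "0 \<le> t"
      then show "ereal (B t + I t) \<le> ereal (b / m - (- (B 0 + I 0) - (- b) / m) * exp (- m * t))"
        using up[of t] by simp
    qed
  qed
  ultimately show "Limsup at_top (\<lambda>t. ereal (B t + I t)) \<le> ereal (b / m)" by simp
qed

lemma main:
  "\<exists>B I M N.
     bee_solution b lam gam m mu r n p h beta delta e B I M N \<and>
     (B 0, I 0, M 0, N 0) = (B0, I0, M0, N0) \<and>
     (\<forall>B' I' M' N'. bee_solution b lam gam m mu r n p h beta delta e B' I' M' N' \<and>
        (B' 0, I' 0, M' 0, N' 0) = (B0, I0, M0, N0) \<longrightarrow>
        (\<forall>t\<ge>0. B' t = B t \<and> I' t = I t \<and> M' t = M t \<and> N' t = N t)) \<and>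
     (\<forall>t>0. (B t, I t, M t, N t) \<in> D0) \<and>
     ereal (b / (m + mu)) \<le> Liminf at_top (\<lambda>t. ereal (B t + I t)) \<and>
     Liminf at_top (\<lambda>t. ereal (B t + I t)) \<le> Limsup at_top (\<lambda>t. ereal (B t + I t)) \<and>
     Limsup at_top (\<lambda>t. ereal (B t + I t)) \<le> ereal (b / m) \<and>
     (\<exists>L>0. \<forall>t\<ge>0. M t + N t \<le> L)"
proof -
  obtain B I M N where sol: "bee_solution b lam gam m mu r n p h beta delta e B I M N"
    and i: "B 0 = B0" "I 0 = I0" "M 0 = M0" "N 0 = N0"
    and bnd: "\<forall>t\<ge>0. B t \<ge> 0 \<and> I t \<ge> 0 \<and> M t \<ge> 0 \<and> N t \<ge> 0 \<and> s1 \<le> B t + I t \<and> B t + I t \<le> s2 \<and> M t + N t \<le> T2"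
    using exists_sol by blast
  have as: "ereal (b / (m + mu)) \<le> Liminf at_top (\<lambda>t. ereal (B t + I t))"
    "Limsup at_top (\<lambda>t. ereal (B t + I t)) \<le> ereal (b / m)"
    using asympt[OF sol] bnd by auto
  have ll: "Liminf at_top (\<lambda>t. ereal (B t + I t)) \<le> Limsup at_top (\<lambda>t. ereal (B t + I t))"
    by (rule Liminf_le_Limsup) simp
  have un: "\<forall>B' I' M' N'. bee_solution b lam gam m mu r n p h beta delta e B' I' M' N' \<and>
        (B' 0, I' 0, M' 0, N' 0) = (B0, I0, M0, N0) \<longrightarrow>
        (\<forall>t\<ge>0. B' t = B t \<and> I' t = I t \<and> M' t = M t \<and> N' t = N t)"
  proof (intro allI impI)
    fix B' I' M' N' :: "real \<Rightarrow> real"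
    fix t :: real
    assume H: "bee_solution b lam gam m mu r n p h beta delta e B' I' M' N' \<and> (B' 0, I' 0, M' 0, N' 0) = (B0, I0, M0, N0)"
      and t: "0 \<le> t"
    show "B' t = B t \<and> I' t = I t \<and> M' t = M t \<and> N' t = N t"
      by (rule unique[OF sol _ conjunct1[OF H]]) (use bnd H i t in auto)
  qed
  have D: "\<forall>t>0. (B t, I t, M t, N t) \<in> D0"
  proof (intro allI impI)
    fix t :: real assume "t > 0"
    then have "B t \<ge> 0 \<and> I t \<ge> 0 \<and> M t \<ge> 0 \<and> N t \<ge> 0 \<and> s1 \<le> B t + I t" using bnd by simp
    then show "(B t, I t, M t, N t) \<in> D0" using kconsts(1) unfolding D0_def by auto
  qed
  have L: "\<exists>L>0. \<forall>t\<ge>0. M t + N t \<le> L" using bnd kconsts(11) by blast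
  show ?thesis using sol i un D as ll L by blast
qed

end

theorem theorem1:
  fixes b lam gam m mu r n p h beta delta e :: real
    and B0 I0 M0 N0 :: real
  assumes "b > 0" "lam > 0" "gam > 0" "m > 0" "mu > 0" "r > 0" "n > 0" "p > 0" "h > 0"
    "beta > 0" "delta > 0" "e > 0"
    and "(B0, I0, M0, N0) \<in> D0"
  shows "\<exists>B I M N.
     bee_solution b lam gam m mu r n p h beta delta e B I M N \<and>
     (B 0, I 0, M 0, N 0) = (B0, I0, M0, N0) \<and>
     (\<forall>B' I' M' N'. bee_solution b lam gam m mu r n p h beta delta e B' I' M' N' \<and>
        (B' 0, I' 0, M' 0, N' 0) = (B0, I0, M0, N0) \<longrightarrow>
        (\<forall>t\<ge>0. B' t = B t \<and> I' t = I t \<and> M' t = M t \<and> N' t = N t)) \<and>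
     (\<forall>t>0. (B t, I t, M t, N t) \<in> D0) \<and>
     ereal (b / (m + mu)) \<le> Liminf at_top (\<lambda>t. ereal (B t + I t)) \<and>
     Liminf at_top (\<lambda>t. ereal (B t + I t)) \<le> Limsup at_top (\<lambda>t. ereal (B t + I t)) \<and>
     Limsup at_top (\<lambda>t. ereal (B t + I t)) \<le> ereal (b / m) \<and>
     (\<exists>L>0. \<forall>t\<ge>0. M t + N t \<le> L)"
proof -
  interpret bees b lam gam m mu r n p h beta delta e B0 I0 M0 N0
    using assms by unfold_locales auto
  show ?thesis by (rule main)
qed


end
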